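(* Let $p>1$ be an integer. Let $A$ be the free abelian group on $a,b,c$, let $B=\langle A,t\mid t^{-1}at=ab,\ t^{-1}bt=bc,\ t^{-1}ct=c\rangle$ (an HNN-extension, torsion-free nilpotent of class 3), let $F=\langle f\rangle$ be infinite cyclic, $K=B\times F$, and let $G_p=\langle K,s\rangle\le\overline{K}$ where $s$ is the unique $p$-th root of $bf$ in the rational closure $\overline{K}$. Then $G_p$ is directly indecomposable (it has no nontrivial direct decomposition); in particular it has no nontrivial abelian direct factor.
   Context: The rational closure $\overline{K}$ of a finitely generated torsion-free nilpotent group $K$ is the torsion-free nilpotent group containing $K$ in which every element has a unique $n$-th root for each $n\ge1$ and every element has a positive power in $K$. *)

theory Defs
  imports "HOL-Algebra.Algebra"
begin

text \<open>B = A \<rtimes> <t> with A = Z^3 (basis a=e1, b=e2, c=e3) and conjugation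
  x \<mapsto> t^-1 x t acting on A by phi, phi(e1)=e1+e2, phi(e2)=e2+e3, phi(e3)=e3.
  phi = I + N with N nilpotent, so phi^y = I + y N + (y choose 2) N^2 makes sense
  for all rational y.  The rational closure of B is Q^3 \<rtimes> Q, where an element
  (v, x) stands for v t^x, with product (v,x)(w,y) = (v + phi^(-x) w, x + y).
  The rational closure of K = B x F is (Q^3 \<rtimes> Q) x Q.\<close>

type_synonym kelem = "(rat \<times> rat \<times> rat) \<times> rat \<times> rat"

definition phi_pow :: "rat \<Rightarrow> rat \<times> rat \<times> rat \<Rightarrow> rat \<times> rat \<times> rat" where
  "phi_pow y w = (case w of (w1, w2, w3) \<Rightarrow>
      (w1, w2 + y * w1, w3 + y * w2 + (y * (y - 1) / 2) * w1))"

definition vadd :: "rat \<times> rat \<times> rat \<Rightarrow> rat \<times> rat \<times> rat \<Rightarrow> rat \<times> rat \<times> rat" where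
  "vadd v w = (case v of (v1, v2, v3) \<Rightarrow> case w of (w1, w2, w3) \<Rightarrow>
      (v1 + w1, v2 + w2, v3 + w3))"

definition kbar_mult :: "kelem \<Rightarrow> kelem \<Rightarrow> kelem" where
  "kbar_mult g h = (case g of (v, x, z) \<Rightarrow> case h of (w, y, u) \<Rightarrow>
      (vadd v (phi_pow (- x) w), x + y, z + u))"

definition Kbar :: "kelem monoid" where
  "Kbar = \<lparr> carrier = UNIV, monoid.mult = kbar_mult, one = ((0, 0, 0), 0, 0) \<rparr>"

definition gen_a :: kelem where "gen_a = ((1, 0, 0), 0, 0)"
definition gen_b :: kelem where "gen_b = ((0, 1, 0), 0, 0)"
definition gen_c :: kelem where "gen_c = ((0, 0, 1), 0, 0)"
definition gen_t :: kelem where "gen_t = ((0, 0, 0), 1, 0)"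
definition gen_f :: kelem where "gen_f = ((0, 0, 0), 0, 1)"

definition K_grp :: "kelem monoid" where
  "K_grp = subgroup_generated Kbar {gen_a, gen_b, gen_c, gen_t, gen_f}"

definition root_s :: "nat \<Rightarrow> kelem" where
  "root_s p = (THE x. x \<in> carrier Kbar \<and> x [^]\<^bsub>Kbar\<^esub> p = gen_b \<otimes>\<^bsub>Kbar\<^esub> gen_f)"

definition G_p :: "nat \<Rightarrow> kelem monoid" where
  "G_p p = subgroup_generated Kbar
      {gen_a, gen_b, gen_c, gen_t, gen_f, root_s p}"

definition internal_direct_product :: "('a, 'b) monoid_scheme \<Rightarrow> 'a set \<Rightarrow> 'a set \<Rightarrow> bool" where
  "internal_direct_product G H L \<longleftrightarrow>
     H \<lhd> G \<and> L \<lhd> G \<and> H \<inter> L = {\<one>\<^bsub>G\<^esub>} \<and> H <#>\<^bsub>G\<^esub> L = carrier G"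

definition directly_indecomposable :: "('a, 'b) monoid_scheme \<Rightarrow> bool" where
  "directly_indecomposable G \<longleftrightarrow>
     (\<forall>H L. internal_direct_product G H L \<longrightarrow> H = {\<one>\<^bsub>G\<^esub>} \<or> L = {\<one>\<^bsub>G\<^esub>})"

end

theory Submission
  imports Defs
begin


definition kinv :: "kelem \<Rightarrow> kelem" where
  "kinv g = (case g of ((v1,v2,v3),x,z) \<Rightarrow> (phi_pow x (-v1,-v2,-v3), -x, -z))"

lemma kmult_eq: "kbar_mult ((v1,v2,v3),x,z) ((w1,w2,w3),y,u) =
  ((v1 + w1, v2 + w2 - x * w1, v3 + w3 - x * w2 + (x * (x + 1) / 2) * w1), x + y, z + u)"
  by (simp add: kbar_mult_def vadd_def phi_pow_def algebra_simps)

lemma kinv_eq: "kinv ((v1,v2,v3),x,z) = ((-v1, -v2 - x * v1, -v3 - x * v2 - (x * (x - 1) / 2) * v1), -x, -z)"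
  by (simp add: kinv_def phi_pow_def field_simps)

lemma Kbar_mult [simp]: "monoid.mult Kbar = kbar_mult" and Kbar_one [simp]: "one Kbar = ((0,0,0),0,0)"
  and Kbar_carrier [simp]: "carrier Kbar = UNIV"
  by (simp_all add: Kbar_def)

lemma kelem_cases: obtains v1 v2 v3 x z where "g = ((v1,v2,v3),x,z)"
  by (metis prod.exhaust)

lemma kassoc: "kbar_mult (kbar_mult g h) k = kbar_mult g (kbar_mult h k)"
  apply (cases g rule: kelem_cases; cases h rule: kelem_cases; cases k rule: kelem_cases)
  apply (simp add: kmult_eq)
  by (simp add: field_simps)

lemma kl_inv: "kbar_mult (kinv g) g = ((0,0,0),0,0)"
  apply (cases g rule: kelem_cases) by (simp add: kmult_eq kinv_eq field_simps)

lemma kr_inv: "kbar_mult g (kinv g) = ((0,0,0),0,0)"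
  apply (cases g rule: kelem_cases) by (simp add: kmult_eq kinv_eq field_simps)

lemma group_Kbar: "group Kbar"
  apply (rule groupI)
  apply (simp_all add: kassoc)
  apply (auto simp: kbar_mult_def vadd_def phi_pow_def)[1]
  by (metis kl_inv kelem_cases)

lemma inv_Kbar: "inv\<^bsub>Kbar\<^esub> g = kinv g"
  by (rule group.inv_equality[OF group_Kbar]) (auto simp: kl_inv)



definition sq :: "nat \<Rightarrow> kelem" where "sq p = ((0, 1 / of_nat p, 0), 0, 1 / of_nat p)"

lemma kmult_snd: "fst (snd (kbar_mult g h)) = fst (snd g) + fst (snd h)"
  "snd (snd (kbar_mult g h)) = snd (snd g) + snd (snd h)"
  by (cases g rule: kelem_cases; cases h rule: kelem_cases; simp add: kmult_eq)+

lemma pow_x: "fst (snd (g [^]\<^bsub>Kbar\<^esub> n)) = of_nat n * fst (snd g)"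
  by (induction n) (auto simp: kmult_snd algebra_simps)

lemma pow_0: "((v1,v2,v3),0,z) [^]\<^bsub>Kbar\<^esub> n = ((of_nat n * v1, of_nat n * v2, of_nat n * v3), 0, of_nat n * z)"
  by (induction n) (auto simp: kmult_eq algebra_simps)

lemma root_s_eq: assumes "p > 0" shows "root_s p = sq p"
  unfolding root_s_def
proof (rule the_equality)
  show "sq p \<in> carrier Kbar \<and> sq p [^]\<^bsub>Kbar\<^esub> p = gen_b \<otimes>\<^bsub>Kbar\<^esub> gen_f"
    using assms by (simp add: sq_def pow_0 gen_b_def gen_f_def kmult_eq)
next
  fix g assume g: "g \<in> carrier Kbar \<and> g [^]\<^bsub>Kbar\<^esub> p = gen_b \<otimes>\<^bsub>Kbar\<^esub> gen_f"
  obtain v1 v2 v3 x z where gd: "g = ((v1,v2,v3),x,z)" by (rule kelem_cases)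
  have "fst (snd (g [^]\<^bsub>Kbar\<^esub> p)) = of_nat p * x" using pow_x[of g p] gd by auto
  with g have "of_nat p * x = 0" by (simp add: gen_b_def gen_f_def kmult_eq)
  with assms have x0: "x = 0" by simp
  have "g [^]\<^bsub>Kbar\<^esub> p = ((of_nat p * v1, of_nat p * v2, of_nat p * v3), 0, of_nat p * z)"
    using gd x0 pow_0 by simp
  with g have "of_nat p * v1 = 0" "of_nat p * v2 = 1" "of_nat p * v3 = 0" "of_nat p * z = 1"
    by (simp_all add: gen_b_def gen_f_def kmult_eq)
  then show "g = sq p" using assms gd x0 by (simp add: sq_def field_simps)
qed

definition gens :: "nat \<Rightarrow> kelem set" where
  "gens p = {gen_a, gen_b, gen_c, gen_t, gen_f, root_s p}"

definition Gc :: "nat \<Rightarrow> kelem set" where "Gc p = generate Kbar (gens p)"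

lemma G_carrier: "carrier (G_p p) = Gc p"
  by (simp add: G_p_def Gc_def gens_def carrier_subgroup_generated)
lemma G_mult: "monoid.mult (G_p p) = kbar_mult"
  by (simp add: G_p_def subgroup_generated_def)
lemma G_one: "one (G_p p) = ((0,0,0),0,0)"
  by (simp add: G_p_def subgroup_generated_def)
lemma G_group: "group (G_p p)"
  unfolding G_p_def by (rule group.group_subgroup_generated[OF group_Kbar])
lemma G_inv: "g \<in> Gc p \<Longrightarrow> inv\<^bsub>G_p p\<^esub> g = kinv g"
  unfolding G_p_def using group.inv_subgroup_generated[OF group_Kbar]
  by (metis G_carrier G_p_def inv_Kbar)

lemma Gc_mult: "g \<in> Gc p \<Longrightarrow> h \<in> Gc p \<Longrightarrow> kbar_mult g h \<in> Gc p"
  unfolding Gc_def using generate.eng[of _ Kbar] by simp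
lemma Gc_inv: "g \<in> Gc p \<Longrightarrow> kinv g \<in> Gc p"
  unfolding Gc_def using group.generate_m_inv_closed[OF group_Kbar] by (simp add: inv_Kbar)
lemma Gc_gens: "x \<in> gens p \<Longrightarrow> x \<in> Gc p"
  unfolding Gc_def by (rule generate.incl)

definition inG :: "nat \<Rightarrow> kelem \<Rightarrow> bool" where
  "inG p g = (case g of ((v1,v2,v3),x,z) \<Rightarrow>
     x \<in> \<int> \<and> v1 \<in> \<int> \<and> v2 - z \<in> \<int> \<and> of_nat p * z \<in> \<int> \<and> of_nat p * v3 \<in> \<int>)"

lemma tri_Ints: "(x::rat) \<in> \<int> \<Longrightarrow> x * (x + 1) / 2 \<in> \<int>"
proof -
  assume "x \<in> \<int>"
  then obtain i where i: "x = of_int i" by (auto elim: Ints_cases)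
  have "even (i * (i + 1))" by simp
  then have "of_int (i * (i + 1) div 2) = (of_int (i * (i+1)) :: rat) / 2"
    by (metis dvd_mult_div_cancel mult.commute nonzero_mult_div_cancel_left of_int_mult of_int_numeral zero_neq_numeral)
  then show ?thesis using i by (metis Ints_of_int of_int_1 of_int_add of_int_mult)
qed

lemma inG_mult: "inG p g \<Longrightarrow> inG p h \<Longrightarrow> inG p (kbar_mult g h)"
proof -
  assume g: "inG p g" and h: "inG p h"
  obtain v1 v2 v3 x z where gd: "g = ((v1,v2,v3),x,z)" by (rule kelem_cases)
  obtain w1 w2 w3 y u where hd: "h = ((w1,w2,w3),y,u)" by (rule kelem_cases)
  have A: "x \<in> \<int>" "v1 \<in> \<int>" "v2 - z \<in> \<int>" "of_nat p * z \<in> \<int>" "of_nat p * v3 \<in> \<int>"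
    using g gd by (auto simp: inG_def)
  have B: "y \<in> \<int>" "w1 \<in> \<int>" "w2 - u \<in> \<int>" "of_nat p * u \<in> \<int>" "of_nat p * w3 \<in> \<int>"
    using h hd by (auto simp: inG_def)
  have pw2: "of_nat p * w2 \<in> \<int>"
  proof -
    have "of_nat p * w2 = of_nat p * (w2 - u) + of_nat p * u" by (simp add: algebra_simps)
    then show ?thesis using B by (metis Ints_add Ints_mult Ints_of_nat)
  qed
  have T: "x * (x + 1) / 2 \<in> \<int>" using A tri_Ints by blast
  have e2: "v2 + w2 - x * w1 - (z + u) = (v2 - z) + (w2 - u) - x * w1" by simp
  have e3: "of_nat p * (v3 + w3 - x * w2 + x * (x + 1) / 2 * w1)
     = of_nat p * v3 + of_nat p * w3 - x * (of_nat p * w2) + of_nat p * (x * (x + 1) / 2) * w1"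
    by (simp add: algebra_simps)
  have C2: "v2 + w2 - x * w1 - (z + u) \<in> \<int>" unfolding e2 using A B by (metis Ints_add Ints_diff Ints_mult)
  have C3: "of_nat p * (v3 + w3 - x * w2 + x * (x + 1) / 2 * w1) \<in> \<int>" unfolding e3
  proof -
    have "of_nat p * (x * (x + 1) / 2) \<in> \<int>" using T by (metis Ints_mult Ints_of_nat)
    then show "of_nat p * v3 + of_nat p * w3 - x * (of_nat p * w2) + of_nat p * (x * (x + 1) / 2) * w1 \<in> \<int>"
      using A B pw2 by (metis Ints_add Ints_diff Ints_mult)
  qed
  have C4: "of_nat p * (z + u) \<in> \<int>" using A B by (simp add: distrib_left Ints_add)
  show ?thesis unfolding gd hd kmult_eq inG_def prod.case
    using A B C2 C3 C4 by (simp add: Ints_add)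
qed

lemma gens_inG: "p > 0 \<Longrightarrow> x \<in> gens p \<Longrightarrow> inG p x"
  by (auto simp: gens_def root_s_eq sq_def inG_def gen_a_def gen_b_def gen_c_def gen_t_def gen_f_def)

lemma gens_inv_inG: "p > 0 \<Longrightarrow> x \<in> gens p \<Longrightarrow> inG p (kinv x)"
  by (auto simp: gens_def root_s_eq sq_def inG_def gen_a_def gen_b_def gen_c_def gen_t_def gen_f_def kinv_eq)

lemma Gc_inG: assumes "p > 0" "g \<in> Gc p" shows "inG p g"
  using assms(2) unfolding Gc_def
proof (induction rule: generate.induct)
  case one
  then show ?case by (simp add: inG_def)
next
  case (incl h)
  then show ?case using gens_inG assms(1) by blast
next
  case (inv h)
  then show ?case using gens_inv_inG assms(1) by (simp add: inv_Kbar)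
next
  case (eng h1 h2)
  then show ?case using inG_mult by simp
qed



abbreviation "k0 \<equiv> ((0::rat,0::rat,0::rat),0::rat,0::rat)"

definition closed_set :: "kelem set \<Rightarrow> bool" where
  "closed_set S \<longleftrightarrow> k0 \<in> S \<and> (\<forall>x\<in>S. \<forall>y\<in>S. kbar_mult x y \<in> S) \<and> (\<forall>x\<in>S. kinv x \<in> S)"

definition dp :: "nat \<Rightarrow> kelem set \<Rightarrow> kelem set \<Rightarrow> bool" where
  "dp p H L \<longleftrightarrow> H \<subseteq> Gc p \<and> L \<subseteq> Gc p \<and> closed_set H \<and> closed_set L \<and> H \<inter> L = {k0}
     \<and> (\<forall>h\<in>H. \<forall>l\<in>L. kbar_mult h l = kbar_mult l h)
     \<and> (\<forall>g\<in>Gc p. \<exists>h\<in>H. \<exists>l\<in>L. g = kbar_mult h l)"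

lemma dp_sym: "dp p H L \<Longrightarrow> dp p L H"
  unfolding dp_def by (metis inf_commute)

lemma pow_closed_nat: assumes "closed_set S" "((v1,v2,v3),0,z) \<in> S"
  shows "((of_nat n * v1, of_nat n * v2, of_nat n * v3),0,of_nat n * z) \<in> S"
proof (induction n)
  case 0
  then show ?case using assms by (simp add: closed_set_def)
next
  case (Suc n)
  then have "kbar_mult ((of_nat n * v1, of_nat n * v2, of_nat n * v3),0,of_nat n * z) ((v1,v2,v3),0,z) \<in> S"
    using assms unfolding closed_set_def by blast
  then show ?case by (simp add: kmult_eq algebra_simps)
qed

lemma pow_closed_int: assumes "closed_set S" "((v1,v2,v3),0,z) \<in> S"
  shows "((of_int k * v1, of_int k * v2, of_int k * v3),0,of_int k * z) \<in> S"
proof (cases "k \<ge> 0")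
  case True
  define n where "n = nat k"
  have "k = int n" using True by (simp add: n_def)
  then show ?thesis using pow_closed_nat[OF assms, of n] by simp
next
  case False
  define n where "n = nat (- k)"
  have n: "k = - int n" using False by (simp add: n_def)
  have "kinv ((of_nat n * v1, of_nat n * v2, of_nat n * v3),0,of_nat n * z) \<in> S"
    using pow_closed_nat[OF assms, of n] assms(1) unfolding closed_set_def by blast
  then show ?thesis using n by (simp add: kinv_eq)
qed

definition comm :: "kelem \<Rightarrow> kelem \<Rightarrow> kelem" where
  "comm g h = kbar_mult (kbar_mult (kbar_mult (kinv g) (kinv h)) g) h"

lemma comm_central: "comm (kbar_mult g ((0,0,a1),0,b1)) (kbar_mult h ((0,0,a2),0,b2)) = comm g h"
  unfolding comm_def
  apply (cases g rule: kelem_cases; cases h rule: kelem_cases)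
  apply (simp only: kmult_eq kinv_eq prod.inject)
  apply (intro conjI)
  by (simp_all add: algebra_simps add_divide_distrib diff_divide_distrib)

lemma comm_closed: "closed_set S \<Longrightarrow> g \<in> S \<Longrightarrow> h \<in> S \<Longrightarrow> comm g h \<in> S"
  unfolding comm_def closed_set_def by blast

lemma gen_b_comm: "comm gen_a gen_t = gen_b"
  by (simp add: comm_def gen_a_def gen_t_def gen_b_def kmult_eq kinv_eq)

lemma cp_comm: "p > 0 \<Longrightarrow> comm (root_s p) gen_t = ((0,0,1/of_nat p),0,0)"
  by (simp add: comm_def root_s_eq sq_def gen_t_def kmult_eq kinv_eq)



lemma core:
  assumes p: "p > 1" and d: "dp p H L" and x0: "\<forall>l\<in>L. fst (snd l) = 0"
  shows "L = {k0}"
proof -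
  have HS: "closed_set H" and LS: "closed_set L" and HL: "H \<inter> L = {k0}"
    and cm: "\<forall>h\<in>H. \<forall>l\<in>L. kbar_mult h l = kbar_mult l h"
    and dec: "\<forall>g\<in>Gc p. \<exists>h\<in>H. \<exists>l\<in>L. g = kbar_mult h l" and LG: "L \<subseteq> Gc p"
    using d unfolding dp_def by blast+
  have p0: "p > 0" using p by simp
  have tG: "gen_t \<in> Gc p" by (rule Gc_gens) (simp add: gens_def)
  obtain ht lt where ht: "ht \<in> H" and lt: "lt \<in> L" and tdec: "gen_t = kbar_mult ht lt"
    using dec tG by blast
  have xht: "fst (snd ht) = 1"
  proof -
    have "fst (snd gen_t) = fst (snd ht) + fst (snd lt)" using tdec kmult_snd(1)[of ht lt] by simp
    moreover have "fst (snd lt) = 0" using x0 lt by blast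
    moreover have "fst (snd gen_t) = 1" by (simp add: gen_t_def)
    ultimately show ?thesis by simp
  qed
  have cent: "\<exists>w u. l = ((0,0,w),0,u)" if l: "l \<in> L" for l
  proof -
    obtain v1 v2 v3 x z where ld: "l = ((v1,v2,v3),x,z)" by (rule kelem_cases)
    obtain a1 a2 a3 xh zh where hd: "ht = ((a1,a2,a3),xh,zh)" by (rule kelem_cases)
    have x: "x = 0" using x0 l ld by auto
    have xh: "xh = 1" using xht hd by simp
    have "kbar_mult ht l = kbar_mult l ht" using cm ht l by blast
    then have "v1 = 0" "v2 = 0" using ld hd x xh by (simp_all add: kmult_eq)
    then show ?thesis using ld x by blast
  qed
  have intL: "of_nat p * w \<in> \<int> \<and> u \<in> \<int>" if "((0,0,w),0,u) \<in> L" for w u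
  proof -
    have "inG p ((0,0,w),0,u)" using Gc_inG[OF p0] LG that by blast
    then show ?thesis by (simp add: inG_def)
  qed
  have commH: "comm g1 g2 \<in> H" if g1G: "g1 \<in> Gc p" and g2G: "g2 \<in> Gc p" for g1 g2
  proof -
    obtain h1 l1 where h1: "h1 \<in> H" and l1: "l1 \<in> L" and g1: "g1 = kbar_mult h1 l1"
      using dec g1G by meson
    obtain h2 l2 where h2: "h2 \<in> H" and l2: "l2 \<in> L" and g2: "g2 = kbar_mult h2 l2"
      using dec g2G by meson
    obtain w1 u1 where l1d: "l1 = ((0,0,w1),0,u1)" using cent[OF l1] by blast
    obtain w2 u2 where l2d: "l2 = ((0,0,w2),0,u2)" using cent[OF l2] by blast
    have "comm g1 g2 = comm h1 h2" unfolding g1 g2 l1d l2d by (rule comm_central)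
    then show ?thesis using comm_closed[OF HS h1 h2] by simp
  qed
  have bH: "gen_b \<in> H" using commH[of gen_a gen_t] gen_b_comm tG by (simp add: Gc_gens gens_def)
  have cpH: "((0,0,1/of_nat p),0,0) \<in> H"
    using commH[of "root_s p" gen_t] cp_comm[OF p0] tG by (simp add: Gc_gens gens_def)
  have sG: "root_s p \<in> Gc p" by (rule Gc_gens) (simp add: gens_def)
  obtain hs ls where hs: "hs \<in> H" and ls: "ls \<in> L" and sdec: "root_s p = kbar_mult hs ls"
    using dec sG by meson
  obtain \<alpha> \<beta> where lsd: "ls = ((0,0,\<alpha>),0,\<beta>)" using cent ls by blast
  have ab: "of_nat p * \<alpha> \<in> \<int>" "\<beta> \<in> \<int>" using intL[of \<alpha> \<beta>] ls unfolding lsd by simp_all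
  have hsd: "hs = ((0, 1/of_nat p, -\<alpha>), 0, 1/of_nat p - \<beta>)"
  proof -
    obtain v1 v2 v3 x z where hd: "hs = ((v1,v2,v3),x,z)" by (rule kelem_cases)
    show ?thesis using sdec unfolding hd lsd root_s_eq[OF p0] sq_def by (simp add: kmult_eq)
  qed
  have "((of_int (int p) * 0, of_int (int p) * (1/of_nat p), of_int (int p) * (-\<alpha>)), 0,
         of_int (int p) * (1/of_nat p - \<beta>)) \<in> H"
    using pow_closed_int[OF HS] hs hsd by blast
  then have hsp: "((0, 1, - (of_nat p * \<alpha>)), 0, 1 - of_nat p * \<beta>) \<in> H"
    using p0 by (simp add: algebra_simps)
  have kb: "kinv gen_b \<in> H" using HS bH by (simp add: closed_set_def)
  have "kbar_mult (kinv gen_b) ((0, 1, - (of_nat p * \<alpha>)), 0, 1 - of_nat p * \<beta>) \<in> H"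
    using HS kb hsp by (simp add: closed_set_def)
  then have m1: "((0, 0, - (of_nat p * \<alpha>)), 0, 1 - of_nat p * \<beta>) \<in> H"
    by (simp add: gen_b_def kinv_eq kmult_eq)
  obtain k where k: "of_nat p * \<alpha> = of_int k" using ab(1) by (auto elim: Ints_cases)
  obtain j where j: "\<beta> = of_int j" using ab(2) by (auto elim: Ints_cases)
  have "((of_int (int p * k) * 0, of_int (int p * k) * 0, of_int (int p * k) * (1/of_nat p)),0,of_int (int p * k) * 0) \<in> H"
    using pow_closed_int[OF HS cpH] by blast
  then have "kbar_mult ((0, 0, - (of_nat p * \<alpha>)), 0, 1 - of_nat p * \<beta>)
       ((0, 0, of_int (int p * k) * (1/of_nat p)),0,0) \<in> H" using m1 HS by (simp add: closed_set_def)
  then have fN: "((0,0,0),0,1 - of_nat p * \<beta>) \<in> H" using k p0 by (simp add: kmult_eq field_simps)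
  define N where "N = 1 - int p * j"
  have Nq: "1 - of_nat p * \<beta> = (of_int N :: rat)" by (simp add: N_def j)
  have N0: "N \<noteq> 0"
  proof
    assume "N = 0"
    then have "int p * j = 1" by (simp add: N_def)
    then have "int p dvd 1" by (metis dvd_triv_left)
    then show False using p by simp
  qed
  show ?thesis
  proof
    show "{k0} \<subseteq> L" using LS by (simp add: closed_set_def)
    show "L \<subseteq> {k0}"
    proof
      fix l assume l: "l \<in> L"
      obtain w u where ld: "l = ((0,0,w),0,u)" using cent l by blast
      have wu: "of_nat p * w \<in> \<int>" "u \<in> \<int>" using intL[of w u] l unfolding ld by simp_all
      obtain m where m: "of_nat p * w = of_int m" using wu(1) by (auto elim: Ints_cases)
      obtain n where n: "u = of_int n" using wu(2) by (auto elim: Ints_cases)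
      have inL: "((of_int N * 0, of_int N * 0, of_int N * w),0,of_int N * u) \<in> L"
        using pow_closed_int[OF LS] l ld by blast
      have A1: "((of_int (m*N) * 0, of_int (m*N) * 0, of_int (m*N) * (1/of_nat p)),0,of_int (m*N) * 0) \<in> H"
        using pow_closed_int[OF HS cpH] by blast
      have A2: "((of_int n * 0, of_int n * 0, of_int n * 0),0,of_int n * of_int N) \<in> H"
        using pow_closed_int[OF HS fN, of n] unfolding Nq .
      have "kbar_mult ((of_int (m*N) * 0, of_int (m*N) * 0, of_int (m*N) * (1/of_nat p)),0,of_int (m*N) * 0)
             ((of_int n * 0, of_int n * 0, of_int n * 0),0,of_int n * of_int N) \<in> H"
        using A1 A2 HS by (simp add: closed_set_def)
      moreover have "kbar_mult ((of_int (m*N) * 0, of_int (m*N) * 0, of_int (m*N) * (1/of_nat p)),0,of_int (m*N) * 0)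
             ((of_int n * 0, of_int n * 0, of_int n * 0),0,of_int n * of_int N)
           = ((of_int N * 0, of_int N * 0, of_int N * w),0,of_int N * u)"
      proof -
        have "w = of_int m / of_nat p" using m p0 by (simp add: field_simps)
        then show ?thesis using n by (simp add: kmult_eq)
      qed
      ultimately have "((of_int N * 0, of_int N * 0, of_int N * w),0,of_int N * u) \<in> H \<inter> L"
        using inL by simp
      then have "of_int N * w = 0" "of_int N * u = 0" using HL by auto
      then show "l \<in> {k0}" using N0 ld by simp
    qed
  qed
qed



lemma cent_comm:
  assumes x0: "x0 \<noteq> 0" and g0: "g0 = ((a1,a2,a3),x0,z0)"
    and c1: "kbar_mult g1 g0 = kbar_mult g0 g1" and c2: "kbar_mult g2 g0 = kbar_mult g0 g2"
  shows "kbar_mult g1 g2 = kbar_mult g2 g1"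
proof -
  obtain b1 b2 b3 y1 u1 where g1: "g1 = ((b1,b2,b3),y1,u1)" by (rule kelem_cases)
  obtain d1 d2 d3 y2 u2 where g2: "g2 = ((d1,d2,d3),y2,u2)" by (rule kelem_cases)
  have e1: "b1 = y1 * a1 / x0" "b2 = (y1*a2 - y1*(y1+1)/2*a1 + x0*(x0+1)/2*b1) / x0"
    using c1 x0 unfolding g0 g1 by (simp_all add: kmult_eq field_simps)
  have e2: "d1 = y2 * a1 / x0" "d2 = (y2*a2 - y2*(y2+1)/2*a1 + x0*(x0+1)/2*d1) / x0"
    using c2 x0 unfolding g0 g2 by (simp_all add: kmult_eq field_simps)
  have A: "y1 * d1 = y2 * b1" using e1 e2 by simp
  have B: "- y1 * d2 + y1 * (y1 + 1) / 2 * d1 = - y2 * b2 + y2 * (y2 + 1) / 2 * b1"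
    unfolding e1(2) e2(2) unfolding e1(1) e2(1) using x0 by (simp add: field_simps)
  show ?thesis unfolding g1 g2 kmult_eq using A B by (simp add: field_simps)
qed

lemma (in group) idp_comm:
  assumes HN: "H \<lhd> G" and LN: "L \<lhd> G" and HL: "H \<inter> L = {\<one>}" and h: "h \<in> H" and l: "l \<in> L"
  shows "h \<otimes> l = l \<otimes> h"
proof -
  have Hs: "subgroup H G" by (rule normal_imp_subgroup[OF HN])
  have Ls: "subgroup L G" by (rule normal_imp_subgroup[OF LN])
  have hc: "h \<in> carrier G" by (rule subgroup.mem_carrier[OF Hs h])
  have lc: "l \<in> carrier G" by (rule subgroup.mem_carrier[OF Ls l])
  have ihH: "inv h \<in> H" by (rule subgroup.m_inv_closed[OF Hs h])
  have ilL: "inv l \<in> L" by (rule subgroup.m_inv_closed[OF Ls l])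
  define c where "c = h \<otimes> l \<otimes> inv h \<otimes> inv l"
  have "h \<otimes> l \<otimes> inv h \<in> L" using normal.inv_op_closed2[OF LN hc l] .
  then have cL: "c \<in> L" unfolding c_def by (rule subgroup.m_closed[OF Ls _ ilL])
  have "l \<otimes> inv h \<otimes> inv l \<in> H" using normal.inv_op_closed2[OF HN lc ihH] .
  then have "h \<otimes> (l \<otimes> inv h \<otimes> inv l) \<in> H" by (rule subgroup.m_closed[OF Hs h])
  moreover have "h \<otimes> (l \<otimes> inv h \<otimes> inv l) = c" unfolding c_def using hc lc by (simp add: m_assoc)
  ultimately have cH: "c \<in> H" by simp
  have "c \<in> H \<inter> L" using cH cL by (rule IntI)
  then have c1: "c = \<one>" unfolding HL by simp
  have "(h \<otimes> l) \<otimes> (inv h \<otimes> inv l) = \<one>" using c1 hc lc unfolding c_def by (simp add: m_assoc)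
  then have "inv (inv h \<otimes> inv l) = h \<otimes> l" using hc lc by (intro inv_equality) auto
  moreover have "inv (inv h \<otimes> inv l) = l \<otimes> h" using hc lc by (simp add: inv_mult_group)
  ultimately show ?thesis by simp
qed

lemma k0_right: "kbar_mult g k0 = g"
  by (cases g rule: kelem_cases) (simp add: kmult_eq)

lemma idp_dp: assumes "internal_direct_product (G_p p) H L" shows "dp p H L"
proof -
  interpret G: group "G_p p" by (rule G_group)
  have HN: "H \<lhd> G_p p" and LN: "L \<lhd> G_p p" and HL: "H \<inter> L = {k0}"
    and HLc: "H <#>\<^bsub>G_p p\<^esub> L = Gc p"
    using assms unfolding internal_direct_product_def G_one G_carrier by blast+
  have cs: "closed_set S \<and> S \<subseteq> Gc p" if "S \<lhd> G_p p" for S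
  proof -
    have sg: "subgroup S (G_p p)" by (rule normal_imp_subgroup[OF that])
    have sub: "S \<subseteq> Gc p" using subgroup.subset[OF sg] G_carrier by simp
    have "k0 \<in> S" using subgroup.one_closed[OF sg] G_one by simp
    moreover have "\<forall>x\<in>S. \<forall>y\<in>S. kbar_mult x y \<in> S" using subgroup.m_closed[OF sg] G_mult by simp
    moreover have "\<forall>x\<in>S. kinv x \<in> S" using subgroup.m_inv_closed[OF sg] G_inv sub by (metis subsetD)
    ultimately show ?thesis using sub by (simp add: closed_set_def)
  qed
  have HL': "H \<inter> L = {\<one>\<^bsub>G_p p\<^esub>}" using HL G_one by simp
  have cm: "\<forall>h\<in>H. \<forall>l\<in>L. kbar_mult h l = kbar_mult l h"
  proof (intro ballI)
    fix h l assume "h \<in> H" "l \<in> L"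
    then show "kbar_mult h l = kbar_mult l h" using G.idp_comm[OF HN LN HL'] G_mult by simp
  qed
  have dec: "\<forall>g\<in>Gc p. \<exists>h\<in>H. \<exists>l\<in>L. g = kbar_mult h l"
    using HLc unfolding set_mult_def G_mult by blast
  show ?thesis unfolding dp_def using cs[OF HN] cs[OF LN] HL cm dec by blast
qed

lemma swap4: "kbar_mult la ht = kbar_mult ht la \<Longrightarrow>
  kbar_mult (kbar_mult ha la) (kbar_mult ht lt) = kbar_mult (kbar_mult ha ht) (kbar_mult la lt)"
proof -
  assume c: "kbar_mult la ht = kbar_mult ht la"
  have "kbar_mult la (kbar_mult ht lt) = kbar_mult (kbar_mult la ht) lt" by (simp add: kassoc)
  also have "\<dots> = kbar_mult (kbar_mult ht la) lt" using c by simp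
  also have "\<dots> = kbar_mult ht (kbar_mult la lt)" by (simp add: kassoc)
  finally have e: "kbar_mult la (kbar_mult ht lt) = kbar_mult ht (kbar_mult la lt)" .
  show ?thesis by (simp add: kassoc e)
qed

lemma at_ne: "kbar_mult gen_a gen_t \<noteq> kbar_mult gen_t gen_a"
  by (simp add: gen_a_def gen_t_def kmult_eq)

lemma caseA:
  assumes d: "dp p H L" and h0: "h0 \<in> H" "fst (snd h0) \<noteq> 0" and l0: "l0 \<in> L" "fst (snd l0) \<noteq> 0"
  shows False
proof -
  have HS: "H \<subseteq> Gc p" and LS: "L \<subseteq> Gc p"
    and cm: "\<forall>h\<in>H. \<forall>l\<in>L. kbar_mult h l = kbar_mult l h"
    and dec: "\<forall>g\<in>Gc p. \<exists>h\<in>H. \<exists>l\<in>L. g = kbar_mult h l"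
    using d unfolding dp_def by blast+
  have aG: "gen_a \<in> Gc p" and tG: "gen_t \<in> Gc p" by (rule Gc_gens, simp add: gens_def)+
  obtain ha la where ha: "ha \<in> H" and la: "la \<in> L" and ad: "gen_a = kbar_mult ha la" using dec aG by meson
  obtain ht lt where ht: "ht \<in> H" and lt: "lt \<in> L" and td: "gen_t = kbar_mult ht lt" using dec tG by meson
  obtain a1 a2 a3 x z where h0d: "h0 = ((a1,a2,a3),x,z)" by (rule kelem_cases)
  obtain b1 b2 b3 y u where l0d: "l0 = ((b1,b2,b3),y,u)" by (rule kelem_cases)
  have hh: "kbar_mult ha ht = kbar_mult ht ha"
  proof (rule cent_comm[of y l0 b1 b2 b3 u])
    show "y \<noteq> 0" using l0 l0d by simp
    show "l0 = ((b1,b2,b3),y,u)" by (rule l0d)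
    show "kbar_mult ha l0 = kbar_mult l0 ha" by (rule cm[rule_format, OF ha l0(1)])
    show "kbar_mult ht l0 = kbar_mult l0 ht" by (rule cm[rule_format, OF ht l0(1)])
  qed
  have ll: "kbar_mult la lt = kbar_mult lt la"
  proof (rule cent_comm[of x h0 a1 a2 a3 z])
    show "x \<noteq> 0" using h0 h0d by simp
    show "h0 = ((a1,a2,a3),x,z)" by (rule h0d)
    show "kbar_mult la h0 = kbar_mult h0 la" by (rule cm[rule_format, OF h0(1) la, symmetric])
    show "kbar_mult lt h0 = kbar_mult h0 lt" by (rule cm[rule_format, OF h0(1) lt, symmetric])
  qed
  have "kbar_mult gen_a gen_t = kbar_mult (kbar_mult ha ht) (kbar_mult la lt)"
  proof -
    have "kbar_mult ht la = kbar_mult la ht" by (rule cm[rule_format, OF ht la])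
    then show ?thesis unfolding ad td by (intro swap4) simp
  qed
  also have "\<dots> = kbar_mult (kbar_mult ht ha) (kbar_mult lt la)" using hh ll by simp
  also have "\<dots> = kbar_mult gen_t gen_a"
  proof -
    have "kbar_mult ha lt = kbar_mult lt ha" by (rule cm[rule_format, OF ha lt])
    then show ?thesis unfolding ad td by (intro swap4[symmetric]) simp
  qed
  finally show False using at_ne by simp
qed

theorem mainTheorem18:
  fixes p :: nat
  assumes "p > 1"
  shows "directly_indecomposable (G_p p)
         \<and> (\<forall>H L. internal_direct_product (G_p p) H L \<and> comm_group ((G_p p)\<lparr>carrier := H\<rparr>)
               \<longrightarrow> H = {\<one>\<^bsub>G_p p\<^esub>})"
proof -
  have indec: "H = {k0} \<or> L = {k0}" if idp: "internal_direct_product (G_p p) H L" for H L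
  proof -
    have d: "dp p H L" using idp_dp[OF idp] .
    show ?thesis
    proof (cases "\<forall>l\<in>L. fst (snd l) = 0")
      case True
      then show ?thesis using core[OF assms d] by blast
    next
      case F1: False
      show ?thesis
      proof (cases "\<forall>h\<in>H. fst (snd h) = 0")
        case True
        then show ?thesis using core[OF assms dp_sym[OF d]] by blast
      next
        case False
        then obtain h0 where "h0 \<in> H" "fst (snd h0) \<noteq> 0" by blast
        moreover obtain l0 where "l0 \<in> L" "fst (snd l0) \<noteq> 0" using F1 by blast
        ultimately show ?thesis using caseA[OF d] by blast
      qed
    qed
  qed
  have part1: "directly_indecomposable (G_p p)"
    unfolding directly_indecomposable_def G_one using indec by blast
  have part2: "H = {k0}" if idp: "internal_direct_product (G_p p) H L"
      and cg: "comm_group ((G_p p)\<lparr>carrier := H\<rparr>)" for H L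
  proof (rule ccontr)
    assume nH: "H \<noteq> {k0}"
    then have L0: "L = {k0}" using indec[OF idp] by blast
    have d: "dp p H L" using idp_dp[OF idp] .
    have inH: "g \<in> H" if gG: "g \<in> Gc p" for g
    proof -
      have dec: "\<forall>g\<in>Gc p. \<exists>h\<in>H. \<exists>l\<in>L. g = kbar_mult h l" using d unfolding dp_def by blast
      obtain h l where "h \<in> H" "l \<in> L" "g = kbar_mult h l" using dec gG by meson
      then show ?thesis using L0 k0_right by simp
    qed
    have aH: "gen_a \<in> H" by (rule inH, rule Gc_gens) (simp add: gens_def)
    have tH: "gen_t \<in> H" by (rule inH, rule Gc_gens) (simp add: gens_def)
    have "monoid.mult ((G_p p)\<lparr>carrier := H\<rparr>) gen_a gen_t = monoid.mult ((G_p p)\<lparr>carrier := H\<rparr>) gen_t gen_a"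
      using comm_monoid.m_comm[OF comm_group.axioms(1)[OF cg]] aH tH by simp
    then show False using at_ne G_mult by simp
  qed
  show ?thesis using part1 part2 unfolding G_one by blast
qed

end
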